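(* Let $(X,\le)$ be a poset and $E$ an equivalence relation on $X$ with ${\le}\subseteq E$. Let $\alpha:X\to X$ be an order automorphism of $(X,\le)$ with $\alpha\subseteq E$ and $\beta:X\to X$ a dual order automorphism of $(X,\le)$ with $\beta\subseteq E$. Then: (i) if $R,S\in\mathsf{Up}(\mathbf E)$ then $R\circ S\in\mathsf{Up}(\mathbf E)$; (ii) if $R,S\in\mathsf{Down}(\mathbf E)$ then $R\circ S\in\mathsf{Down}(\mathbf E)$; (iii) $R\in\mathsf{Up}(\mathbf E)$ iff $R^c\in\mathsf{Down}(\mathbf E)$; (iv) $R\in\mathsf{Up}(\mathbf E)$ iff $R^\smile\in\mathsf{Down}(\mathbf E)$; (v) if $R\in\mathsf{Up}(\mathbf E)$ then $\alpha\circ R\in\mathsf{Up}(\mathbf E)$ and $R\circ\alpha\in\mathsf{Up}(\mathbf E)$; (vi) if $R\in\mathsf{Down}(\mathbf E)$ then $\beta\circ R\circ\beta\in\mathsf{Up}(\mathbf E)$.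
   Context: For binary relations: converse $R^\smile=\{(x,y)\mid(y,x)\in R\}$; composition $R\circ S=\{(x,y)\mid\exists z\,((x,z)\in R,(z,y)\in S)\}$. Functions $X\to X$ are identified with their graphs $\{(x,\gamma(x))\}$. For a poset $(X,\le)$ and an equivalence relation $E\supseteq{\le}$ on $X$, $E$ is partially ordered by $(u,v)\preceq(x,y)$ iff $x\le u$ and $v\le y$; $\mathbf E=(E,\preceq)$, and $\mathsf{Up}(\mathbf E)$, $\mathsf{Down}(\mathbf E)$ are its sets of up-sets and down-sets. For $R\subseteq E$, $R^c=E\setminus R$. An order automorphism is a bijection $\alpha$ with $x\le y\iff\alpha(x)\le\alpha(y)$; a dual order automorphism is a bijection $\beta$ with $x\le y\iff\beta(y)\le\beta(x)$. *)

theory Defs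
  imports Main
begin

text \<open>The poset (X, \<le>) is the type 'a with its order; functions are identified with graphs.\<close>

definition fgraph :: "('a \<Rightarrow> 'a) \<Rightarrow> ('a \<times> 'a) set" where
  "fgraph f = {(x, f x) | x. True}"

definition order_automorphism :: "('a::order \<Rightarrow> 'a) \<Rightarrow> bool" where
  "order_automorphism f \<longleftrightarrow> bij f \<and> (\<forall>x y. x \<le> y \<longleftrightarrow> f x \<le> f y)"

definition dual_order_automorphism :: "('a::order \<Rightarrow> 'a) \<Rightarrow> bool" where
  "dual_order_automorphism f \<longleftrightarrow> bij f \<and> (\<forall>x y. x \<le> y \<longleftrightarrow> f y \<le> f x)"

definition E_le :: "('a::order \<times> 'a) \<Rightarrow> ('a \<times> 'a) \<Rightarrow> bool" where
  "E_le p q \<longleftrightarrow> fst q \<le> fst p \<and> snd p \<le> snd q"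

definition Up :: "('a::order \<times> 'a) set \<Rightarrow> ('a \<times> 'a) set set" where
  "Up E = {R. R \<subseteq> E \<and> (\<forall>p\<in>R. \<forall>q\<in>E. E_le p q \<longrightarrow> q \<in> R)}"

definition Down :: "('a::order \<times> 'a) set \<Rightarrow> ('a \<times> 'a) set set" where
  "Down E = {R. R \<subseteq> E \<and> (\<forall>p\<in>R. \<forall>q\<in>E. E_le q p \<longrightarrow> q \<in> R)}"

end

theory Submission
  imports Defs
begin

theorem lemma3p5:
  fixes E :: "('a::order \<times> 'a) set" and \<alpha> \<beta> :: "'a \<Rightarrow> 'a"
  assumes "equiv UNIV E"
    and "{(x, y). x \<le> y} \<subseteq> E"
    and "order_automorphism \<alpha>" and "fgraph \<alpha> \<subseteq> E"
    and "dual_order_automorphism \<beta>" and "fgraph \<beta> \<subseteq> E"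
  shows "(\<forall>R S. R \<in> Up E \<and> S \<in> Up E \<longrightarrow> R O S \<in> Up E)
    \<and> (\<forall>R S. R \<in> Down E \<and> S \<in> Down E \<longrightarrow> R O S \<in> Down E)
    \<and> (\<forall>R. R \<subseteq> E \<longrightarrow> (R \<in> Up E \<longleftrightarrow> E - R \<in> Down E))
    \<and> (\<forall>R. R \<subseteq> E \<longrightarrow> (R \<in> Up E \<longleftrightarrow> R\<inverse> \<in> Down E))
    \<and> (\<forall>R. R \<in> Up E \<longrightarrow> fgraph \<alpha> O R \<in> Up E \<and> R O fgraph \<alpha> \<in> Up E)
    \<and> (\<forall>R. R \<in> Down E \<longrightarrow> fgraph \<beta> O R O fgraph \<beta> \<in> Up E)"
proof -
  have sy: "\<And>x y. (x,y) \<in> E \<Longrightarrow> (y,x) \<in> E" using assms(1)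
    by (meson equivE symE)
  have tr: "\<And>x y z. (x,y) \<in> E \<Longrightarrow> (y,z) \<in> E \<Longrightarrow> (x,z) \<in> E" using assms(1)
    by (meson equivE transE)
  have aE: "\<And>x. (x, \<alpha> x) \<in> E" using assms(4) unfolding fgraph_def by auto
  have bE: "\<And>x. (x, \<beta> x) \<in> E" using assms(6) unfolding fgraph_def by auto
  have am: "\<And>x y. x \<le> y \<longleftrightarrow> \<alpha> x \<le> \<alpha> y" and asurj: "\<And>y. \<exists>x. y = \<alpha> x"
    using assms(3) unfolding order_automorphism_def bij_def surj_def by auto
  have bm: "\<And>x y. x \<le> y \<longleftrightarrow> \<beta> y \<le> \<beta> x" and bsurj: "\<And>y. \<exists>x. y = \<beta> x"
    using assms(5) unfolding dual_order_automorphism_def bij_def surj_def by auto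
  have ga: "fgraph \<alpha> O R = {(x,y). (\<alpha> x, y) \<in> R}" for R
    unfolding fgraph_def by auto
  have gb: "fgraph \<beta> O R O fgraph \<beta> = {(x,y). \<exists>z. y = \<beta> z \<and> (\<beta> x, z) \<in> R}" for R
    unfolding fgraph_def by auto
  have ra: "R O fgraph \<alpha> = {(x,y). \<exists>z. y = \<alpha> z \<and> (x, z) \<in> R}" for R
    unfolding fgraph_def by auto
  have p1: "R O S \<in> Up E" if "R \<in> Up E" "S \<in> Up E" for R S
  proof -
    have "R O S \<subseteq> E" using that unfolding Up_def by (auto intro: tr)
    moreover have "q \<in> R O S" if "p \<in> R O S" "q \<in> E" "E_le p q" for p q
    proof -
      obtain x y u v where pq: "p = (x,y)" "q = (u,v)" by (cases p, cases q)
      from that pq obtain z where xz: "(x,z) \<in> R" "(z,y) \<in> S" by auto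
      have le: "u \<le> x" "y \<le> v" using that pq unfolding E_le_def by auto
      have "(x,z) \<in> E" "(z,y) \<in> E" using xz \<open>R \<in> Up E\<close> \<open>S \<in> Up E\<close> unfolding Up_def by auto
      moreover have "(u,x) \<in> E" "(y,v) \<in> E" using le assms(2) by auto
      ultimately have uz: "(u,z) \<in> E" and zv: "(z,v) \<in> E" using tr by blast+
      have "(u,z) \<in> R" using \<open>R \<in> Up E\<close> xz(1) uz le unfolding Up_def E_le_def by force
      moreover have "(z,v) \<in> S" using \<open>S \<in> Up E\<close> xz(2) zv le unfolding Up_def E_le_def by force
      ultimately show ?thesis using pq by auto
    qed
    ultimately show ?thesis unfolding Up_def by auto
  qed
  have p2: "R O S \<in> Down E" if "R \<in> Down E" "S \<in> Down E" for R S
  proof -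
    have "R O S \<subseteq> E" using that unfolding Down_def by (auto intro: tr)
    moreover have "q \<in> R O S" if "p \<in> R O S" "q \<in> E" "E_le q p" for p q
    proof -
      obtain x y u v where pq: "p = (x,y)" "q = (u,v)" by (cases p, cases q)
      from that pq obtain z where xz: "(x,z) \<in> R" "(z,y) \<in> S" by auto
      have le: "x \<le> u" "v \<le> y" using that pq unfolding E_le_def by auto
      have "(x,z) \<in> E" "(z,y) \<in> E" using xz \<open>R \<in> Down E\<close> \<open>S \<in> Down E\<close> unfolding Down_def by auto
      moreover have "(u,x) \<in> E" "(y,v) \<in> E" using le assms(2) sy by auto
      ultimately have uz: "(u,z) \<in> E" and zv: "(z,v) \<in> E" using tr by blast+
      have "(u,z) \<in> R" using \<open>R \<in> Down E\<close> xz(1) uz le unfolding Down_def E_le_def by force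
      moreover have "(z,v) \<in> S" using \<open>S \<in> Down E\<close> xz(2) zv le unfolding Down_def E_le_def by force
      ultimately show ?thesis using pq by auto
    qed
    ultimately show ?thesis unfolding Down_def by auto
  qed
  have p3: "R \<in> Up E \<longleftrightarrow> E - R \<in> Down E" if "R \<subseteq> E" for R
    using that unfolding Up_def Down_def by blast
  have p4: "R \<in> Up E \<longleftrightarrow> R\<inverse> \<in> Down E" if "R \<subseteq> E" for R
  proof
    assume U: "R \<in> Up E"
    have "(v,u) \<in> R" if "(q,p) \<in> R" "(u,v) \<in> E" "p \<le> u" "v \<le> q" for p q u v
      using U that sy unfolding Up_def E_le_def by force
    then show "R\<inverse> \<in> Down E" using U sy unfolding Up_def Down_def E_le_def by fastforce
  next
    assume D: "R\<inverse> \<in> Down E"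
    have "(u,v) \<in> R" if "(p,q) \<in> R" "(u,v) \<in> E" "u \<le> p" "q \<le> v" for p q u v
    proof -
      have "(v,u) \<in> E" using that sy by blast
      then have "(v,u) \<in> R\<inverse>" using D that unfolding Down_def E_le_def by force
      then show ?thesis by simp
    qed
    then show "R \<in> Up E" using \<open>R \<subseteq> E\<close> unfolding Up_def E_le_def by fastforce
  qed
  have p5: "fgraph \<alpha> O R \<in> Up E \<and> R O fgraph \<alpha> \<in> Up E" if "R \<in> Up E" for R
  proof
    show "fgraph \<alpha> O R \<in> Up E" unfolding ga Up_def
    proof (safe)
      fix x y assume "(\<alpha> x, y) \<in> R"
      then show "(x,y) \<in> E" using that aE tr unfolding Up_def by blast
    next
      fix x y u v assume h: "(\<alpha> x, y) \<in> R" "(u,v) \<in> E" "E_le (x,y) (u,v)"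
      then have "u \<le> x" "y \<le> v" unfolding E_le_def by auto
      then have "\<alpha> u \<le> \<alpha> x" using am by blast
      moreover have "(\<alpha> u, v) \<in> E" using h(2) aE sy tr by blast
      ultimately show "(\<alpha> u, v) \<in> R" using that h \<open>y \<le> v\<close> unfolding Up_def E_le_def by auto
    qed
    show "R O fgraph \<alpha> \<in> Up E" unfolding ra Up_def
    proof (safe)
      fix x z assume "(x, z) \<in> R"
      then show "(x, \<alpha> z) \<in> E" using that aE tr unfolding Up_def by blast
    next
      fix x z u v assume h: "(x, z) \<in> R" "(u,v) \<in> E" "E_le (x,\<alpha> z) (u,v)"
      obtain w where w: "v = \<alpha> w" using asurj by blast
      from h have "u \<le> x" "\<alpha> z \<le> v" unfolding E_le_def by auto
      then have "z \<le> w" using am w by blast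
      moreover have "(u, w) \<in> E" using h(2) w aE sy tr by blast
      ultimately have "(u,w) \<in> R" using that h \<open>u \<le> x\<close> unfolding Up_def E_le_def by auto
      then show "\<exists>z. v = \<alpha> z \<and> (u, z) \<in> R" using w by blast
    qed
  qed
  have p6: "fgraph \<beta> O R O fgraph \<beta> \<in> Up E" if "R \<in> Down E" for R
    unfolding gb Up_def
  proof (safe)
    fix x z assume "(\<beta> x, z) \<in> R"
    then have "(\<beta> x, z) \<in> E" using that unfolding Down_def by blast
    then show "(x, \<beta> z) \<in> E" using bE sy tr by blast
  next
    fix x z u v assume h: "(\<beta> x, z) \<in> R" "(u,v) \<in> E" "E_le (x,\<beta> z) (u,v)"
    obtain w where w: "v = \<beta> w" using bsurj by blast
    from h have "u \<le> x" "\<beta> z \<le> v" unfolding E_le_def by auto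
    then have "w \<le> z" "\<beta> x \<le> \<beta> u" using bm w by blast+
    moreover have "(\<beta> u, w) \<in> E" using h(2) w bE sy tr by blast
    ultimately have "(\<beta> u,w) \<in> R" using that h unfolding Down_def E_le_def by auto
    then show "\<exists>z. v = \<beta> z \<and> (\<beta> u, z) \<in> R" using w by blast
  qed
  show ?thesis using p1 p2 p3 p4 p5 p6 by blast
qed

end
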